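(* For the sequences generated by Algorithm IRG (with any stepsize rule), the direction sequence $\{d^k\}$ is gradient associated with $\{x^k\}$.
   Context: Algorithm IRG (general inexact reduced gradient framework). Let $f:\mathbb R^n\to\mathbb R$ be continuously differentiable. Parameters: initial point $x^1\in\mathbb R^n$, initial radii $\varepsilon_1>0$, $r_1>0$, reduction factors $\mu,\theta\in(0,1)$, and a sequence $\{\rho_k\}$ of positive numbers. For $k=1,2,\dots$: (1) choose $g^k\in\mathbb R^n$ with $\|g^k-\nabla f(x^k)\|\le\min\{\varepsilon_k,\rho_k\}$; (2) if $\|g^k\|\le r_k+\varepsilon_k$, set $r_{k+1}=\mu r_k$, $\varepsilon_{k+1}=\theta\varepsilon_k$, $d^k=0$; otherwise set $r_{k+1}=r_k$, $\varepsilon_{k+1}=\varepsilon_k$ and $d^k=-\frac{\|g^k\|-\varepsilon_k}{\|g^k\|}g^k$; (3) choose a stepsize $t_k>0$ by some rule; (4) set $x^{k+1}=x^k+t_kd^k$. A direction sequence $\{d^k\}$ is called gradient associated with $\{x^k\}$ if for every infinite set $J\subset\mathbb N$, $d^k\to0$ along $J$ implies $\nabla f(x^k)\to 0$ along $J$. *)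

theory Defs
  imports "HOL-Analysis.Analysis"
begin

text \<open>Convergence of a sequence along an index set J: the filter
  sequentially restricted to J.\<close>

definition gradient_associated ::
  "('a::real_normed_vector \<Rightarrow> 'a) \<Rightarrow> (nat \<Rightarrow> 'a) \<Rightarrow> (nat \<Rightarrow> 'a) \<Rightarrow> bool" where
  "gradient_associated gradf x d \<longleftrightarrow>
     (\<forall>J::nat set. infinite J \<longrightarrow>
        (d \<longlongrightarrow> 0) (inf sequentially (principal J)) \<longrightarrow>
        ((\<lambda>k. gradf (x k)) \<longlongrightarrow> 0) (inf sequentially (principal J)))"

end

theory Submission
  imports Defs
begin

theorem mainTheorem8:
  fixes f :: "'a::euclidean_space \<Rightarrow> real"
    and gradf :: "'a \<Rightarrow> 'a"
    and x g d :: "nat \<Rightarrow> 'a"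
    and eps r rho t :: "nat \<Rightarrow> real"
    and \<mu> \<theta> :: real
  assumes grad: "\<And>y. (f has_derivative (\<lambda>h. gradf y \<bullet> h)) (at y)"
    and grad_cont: "continuous_on UNIV gradf"
    and eps0: "eps 0 > 0" and r0: "r 0 > 0"
    and mu: "0 < \<mu>" "\<mu> < 1" and theta: "0 < \<theta>" "\<theta> < 1"
    and rho: "\<And>k. rho k > 0"
    and g_err: "\<And>k. norm (g k - gradf (x k)) \<le> min (eps k) (rho k)"
    and null_step: "\<And>k. norm (g k) \<le> r k + eps k \<Longrightarrow>
        r (Suc k) = \<mu> * r k \<and> eps (Suc k) = \<theta> * eps k \<and> d k = 0"
    and descent_step: "\<And>k. \<not> norm (g k) \<le> r k + eps k \<Longrightarrow>
        r (Suc k) = r k \<and> eps (Suc k) = eps k \<and>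
        d k = - ((norm (g k) - eps k) / norm (g k)) *\<^sub>R g k"
    and t_pos: "\<And>k. t k > 0"
    and x_upd: "\<And>k. x (Suc k) = x k + t k *\<^sub>R d k"
  shows "gradient_associated gradf x d"
proof -
  have pos: "eps k > 0 \<and> r k > 0" for k
  proof (induction k)
    case 0 then show ?case using eps0 r0 by simp
  next
    case (Suc k) then show ?case
      using null_step[of k] descent_step[of k] mu theta by (cases "norm (g k) \<le> r k + eps k") auto
  qed
  have mono1: "eps (Suc k) \<le> eps k \<and> r (Suc k) \<le> r k" for k
    using null_step[of k] descent_step[of k] mu theta pos[of k]
    by (cases "norm (g k) \<le> r k + eps k") (simp_all add: mult_le_cancel_right1)
  have monoe: "eps k \<le> eps j" if "j \<le> k" for j k
    using that
  proof (induction rule: dec_induct)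
    case (step n) then show ?case using mono1[of n] by linarith
  qed simp
  have monor: "r k \<le> r j" if "j \<le> k" for j k
    using that
  proof (induction rule: dec_induct)
    case (step n) then show ?case using mono1[of n] by linarith
  qed simp
  have gbound: "norm (gradf (x k)) \<le> norm (g k) + eps k" for k
  proof -
    have "norm (gradf (x k)) \<le> norm (g k) + norm (g k - gradf (x k))"
      using norm_triangle_sub[of "gradf (x k)" "g k"] norm_minus_commute[of "gradf (x k)" "g k"] by simp
    then show ?thesis using g_err[of k] by auto
  qed
  have dnorm: "norm (d k) = norm (g k) - eps k" if "\<not> norm (g k) \<le> r k + eps k" for k
  proof -
    have ng: "norm (g k) > 0" using that pos[of k] by auto
    have "norm (d k) = \<bar>(norm (g k) - eps k) / norm (g k)\<bar> * norm (g k)"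
      using descent_step[OF that] by simp
    also have "\<dots> = norm (g k) - eps k" using that pos[of k] ng by (simp add: abs_of_pos)
    finally show ?thesis .
  qed
  have bound: "norm (gradf (x k)) \<le> norm (d k) + (r k + 2 * eps k)" for k
    using gbound[of k] dnorm[of k] pos[of k] null_step[of k] norm_ge_zero[of "d k"]
    by (cases "norm (g k) \<le> r k + eps k") auto
  show ?thesis unfolding gradient_associated_def
  proof (intro allI impI)
    fix J :: "nat set"
    assume Jinf: "infinite J" and dlim: "(d \<longlongrightarrow> 0) (inf sequentially (principal J))"
    show "((\<lambda>k. gradf (x k)) \<longlongrightarrow> 0) (inf sequentially (principal J))"
    proof (cases "\<forall>N. \<exists>k\<ge>N. norm (g k) \<le> r k + eps k")
      case True
      define c where "c = max \<mu> \<theta>"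
      have c: "0 < c" "c < 1" using mu theta by (auto simp: c_def)
      have geo: "\<exists>N. \<forall>k\<ge>N. eps k \<le> c^m * eps 0 \<and> r k \<le> c^m * r 0" for m
      proof (induction m)
        case 0 then show ?case using monoe monor by auto
      next
        case (Suc m)
        then obtain N where N: "\<forall>k\<ge>N. eps k \<le> c^m * eps 0 \<and> r k \<le> c^m * r 0" by blast
        obtain k0 where k0: "k0 \<ge> N" "norm (g k0) \<le> r k0 + eps k0" using True by blast
        have e1: "eps (Suc k0) \<le> c^Suc m * eps 0"
        proof -
          have "eps (Suc k0) = \<theta> * eps k0" using null_step[OF k0(2)] by simp
          also have "\<dots> \<le> c * (c^m * eps 0)"
            using N k0(1) pos[of k0] theta by (intro mult_mono) (auto simp: c_def)
          finally show ?thesis by simp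
        qed
        have r1: "r (Suc k0) \<le> c^Suc m * r 0"
        proof -
          have "r (Suc k0) = \<mu> * r k0" using null_step[OF k0(2)] by simp
          also have "\<dots> \<le> c * (c^m * r 0)"
            using N k0(1) pos[of k0] mu by (intro mult_mono) (auto simp: c_def)
          finally show ?thesis by simp
        qed
        show ?case
          by (rule exI[of _ "Suc k0"]) (use e1 r1 monoe monor order_trans in blast)
      qed
      have rl: "((\<lambda>k. r k + 2 * eps k) \<longlongrightarrow> 0) sequentially"
      proof (rule tendstoI)
        fix e :: real assume e: "e > 0"
        have "(\<lambda>m. c^m * (r 0 + 2 * eps 0)) \<longlonglongrightarrow> 0 * (r 0 + 2 * eps 0)"
          by (intro tendsto_mult tendsto_const LIMSEQ_power_zero) (use c in auto)
        then have "\<forall>\<^sub>F m in sequentially. c^m * (r 0 + 2 * eps 0) < e"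
          using e by (intro order_tendstoD(2)) auto
        then obtain M where "\<forall>m\<ge>M. c^m * (r 0 + 2 * eps 0) < e"
          unfolding eventually_sequentially by blast
        then obtain m where m: "c^m * (r 0 + 2 * eps 0) < e" by blast
        obtain N where N: "\<forall>k\<ge>N. eps k \<le> c^m * eps 0 \<and> r k \<le> c^m * r 0" using geo by blast
        show "\<forall>\<^sub>F k in sequentially. dist (r k + 2 * eps k) 0 < e"
          unfolding eventually_sequentially
        proof (intro exI allI impI)
          fix k assume "N \<le> k"
          then have "r k + 2 * eps k \<le> c^m * (r 0 + 2 * eps 0)" using N by (auto simp: algebra_simps)
          then show "dist (r k + 2 * eps k) 0 < e" using m pos[of k] by simp
        qed
      qed
      have rl2: "((\<lambda>k. r k + 2 * eps k) \<longlongrightarrow> 0) (inf sequentially (principal J))"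
        using rl by (rule filterlim_mono) (auto)
      have "((\<lambda>k. norm (d k) + (r k + 2 * eps k)) \<longlongrightarrow> 0 + 0) (inf sequentially (principal J))"
        by (intro tendsto_add tendsto_norm_zero dlim rl2)
      then have lim: "((\<lambda>k. norm (d k) + (r k + 2 * eps k)) \<longlongrightarrow> 0) (inf sequentially (principal J))"
        by simp
      have ev: "\<forall>\<^sub>F k in inf sequentially (principal J).
          norm (gradf (x k)) \<le> norm (norm (d k) + (r k + 2 * eps k)) * 1"
      proof (rule always_eventually, rule allI)
        fix k show "norm (gradf (x k)) \<le> norm (norm (d k) + (r k + 2 * eps k)) * 1"
          using bound[of k] by simp
      qed
      show ?thesis by (rule tendsto_0_le[OF lim ev])
    next
      case False
      then obtain N where N: "\<And>k. k \<ge> N \<Longrightarrow> \<not> norm (g k) \<le> r k + eps k" by auto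
      have const: "eps k = eps N \<and> r k = r N" if "k \<ge> N" for k
        using that
      proof (induction rule: dec_induct)
        case base then show ?case by simp
      next
        case (step n) then show ?case using descent_step[OF N[of n]] by simp
      qed
      have big: "norm (d k) > r N" if "k \<ge> N" for k
        using dnorm[OF N[OF that]] N[OF that] const[OF that] by simp
      have "\<forall>\<^sub>F k in inf sequentially (principal J). norm (d k) < r N"
        using tendstoD[OF dlim, of "r N"] pos[of N] by (simp add: dist_norm)
      then obtain M where M: "\<And>k. k \<ge> M \<Longrightarrow> k \<in> J \<Longrightarrow> norm (d k) < r N"
        by (auto simp: eventually_inf_principal eventually_sequentially)
      obtain k where k: "k \<in> J" "k \<ge> max M N"
        using Jinf by (meson infinite_nat_iff_unbounded_le)
      then show ?thesis using M[of k] big[of k] by simp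
    qed
  qed
qed

end
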